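(* Let $\nu$ be a measure on $\mathbb{R}^d$ with $\nu(\{0\})=0$. Then $\nu\in\mathfrak{M}_L^2(\mathbb{R}^d)$ if and only if $\nu^{(2)}\in\mathfrak{M}_L^1(\mathbb{R}^d)$, and in this case $\mathcal{A}_2(\nu)=\mathcal{A}_1(\nu^{(2)})$. Also $\nu\in\mathfrak{M}_L^1(\mathbb{R}^d)$ if and only if $\nu^{(1/2)}\in\mathfrak{M}_L^2(\mathbb{R}^d)$, and in this case $\mathcal{A}_1(\nu)=\mathcal{A}_2(\nu^{(1/2)})$.
   Context: A Lévy measure on $\mathbb{R}^d$ is a measure $\nu$ with $\nu(\{0\})=0$ and $\int(1\wedge|x|^2)\nu(\mathrm{d}x)<\infty$; their class is $\mathfrak{M}_L^2(\mathbb{R}^d)$, and $\mathfrak{M}_L^1(\mathbb{R}^d)$ is the class of Lévy measures with $\int(1\wedge|x|)\nu(\mathrm{d}x)<\infty$. For $s>0$ set $a_1(r;s)=2\pi^{-1}(s-r^2)^{-1/2}$ for $0<r<s^{1/2}$ and $0$ otherwise; $a_2(r;s)=2\pi^{-1}(s^2-r^2)^{-1/2}$ for $0<r<s$ and $0$ otherwise. For a measure $\nu$ on $\mathbb{R}^d$ with $\nu(\{0\})=0$ and $k=1,2$, $\mathcal{A}_k(\nu)(B)=\int_{\mathbb{R}^d\setminus\{0\}}\nu(\mathrm{d}x)\int_0^\infty a_k(r;|x|)1_B(rx/|x|)\,\mathrm{d}r$, $B$ Borel. For $p>0$, the $(p)$-transformation of such $\nu$ is the measure $\nu^{(p)}(B)=\int_{\mathbb{R}^d\setminus\{0\}}1_B(|x|^p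 x/|x|)\,\nu(\mathrm{d}x)$. *)

theory Defs
  imports "HOL-Analysis.Analysis"
begin

definition levy2 :: "'a::euclidean_space measure \<Rightarrow> bool" where
  "levy2 nu \<longleftrightarrow> sets nu = sets borel \<and> emeasure nu {0} = 0 \<and>
     (\<integral>\<^sup>+ x. ennreal (min 1 (norm x ^ 2)) \<partial>nu) < \<infinity>"

definition levy1 :: "'a::euclidean_space measure \<Rightarrow> bool" where
  "levy1 nu \<longleftrightarrow> sets nu = sets borel \<and> emeasure nu {0} = 0 \<and>
     (\<integral>\<^sup>+ x. ennreal (min 1 (norm x)) \<partial>nu) < \<infinity>"

definition a1 :: "real \<Rightarrow> real \<Rightarrow> real" where
  "a1 r s = (if 0 < r \<and> r < sqrt s then 2 / pi * (s - r\<^sup>2) powr (-1/2) else 0)"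

definition a2 :: "real \<Rightarrow> real \<Rightarrow> real" where
  "a2 r s = (if 0 < r \<and> r < s then 2 / pi * (s\<^sup>2 - r\<^sup>2) powr (-1/2) else 0)"

definition trA :: "(real \<Rightarrow> real \<Rightarrow> real) \<Rightarrow> 'a::euclidean_space measure \<Rightarrow> 'a measure" where
  "trA a nu = measure_of UNIV (sets borel)
     (\<lambda>B. \<integral>\<^sup>+ x. indicator (-{0}) x *
          (\<integral>\<^sup>+ r. indicator {0<..} r * ennreal (a r (norm x)) * indicator B (r *\<^sub>R (x /\<^sub>R norm x)) \<partial>lborel) \<partial>nu)"

definition A1 :: "'a::euclidean_space measure \<Rightarrow> 'a measure" where
  "A1 = trA a1"

definition A2 :: "'a::euclidean_space measure \<Rightarrow> 'a measure" where
  "A2 = trA a2"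

definition ptrans :: "real \<Rightarrow> 'a::euclidean_space measure \<Rightarrow> 'a measure" where
  "ptrans p nu = measure_of UNIV (sets borel)
     (\<lambda>B. \<integral>\<^sup>+ x. indicator (-{0}) x * indicator B (norm x powr p *\<^sub>R (x /\<^sub>R norm x)) \<partial>nu)"

end

theory Submission
  imports Defs
begin

definition Tp :: "real \<Rightarrow> 'a::euclidean_space \<Rightarrow> 'a" where
  "Tp p x = norm x powr p *\<^sub>R (x /\<^sub>R norm x)"

lemma Tp_meas[measurable]: "Tp p \<in> borel_measurable borel"
  unfolding Tp_def by measurable

lemma ptrans_eq:
  fixes nu :: "'a::euclidean_space measure"
  assumes "sets nu = sets borel"
  shows "ptrans p nu = distr (density nu (indicator (-{0}))) borel (Tp p)"
proof -
  let ?R = "distr (density nu (indicator (-{0}))) borel (Tp p)"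
  have "?R = measure_of UNIV (sets borel) (emeasure ?R)"
    using measure_of_of_measure[of ?R] by simp
  also have "\<dots> = ptrans p nu"
    unfolding ptrans_def
  proof (rule measure_of_eq)
    show "sets borel \<subseteq> Pow UNIV" by simp
    fix B :: "'a set" assume "B \<in> sigma_sets UNIV (sets borel)"
    then have B: "B \<in> sets borel"
      by (metis sets.sigma_sets_eq space_borel)
    have mT: "Tp p \<in> measurable (density nu (indicator (-{0}))) borel"
      using assms by (simp add: measurable_def space_borel)

    have "emeasure ?R B = emeasure (density nu (indicator (-{0}))) (Tp p -` B \<inter> space (density nu (indicator (-{0}))))"
      by (rule emeasure_distr[OF mT B])
    also have "\<dots> = \<integral>\<^sup>+ x. indicator (-{0}) x * indicator (Tp p -` B \<inter> space nu) x \<partial>nu"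
      using assms B mT
      by (subst emeasure_density) (auto simp: nn_integral_set_ennreal mult.commute)
    also have "\<dots> = \<integral>\<^sup>+ x. indicator (-{0}) x * indicator B (norm x powr p *\<^sub>R (x /\<^sub>R norm x)) \<partial>nu"
      by (auto intro!: nn_integral_cong simp: indicator_def Tp_def)
    finally show "emeasure ?R B = \<dots>" .
  qed
  finally show ?thesis by simp
qed

lemma ind_meas: "B \<in> sets borel \<Longrightarrow> (\<lambda>(y::'a::euclidean_space, r::real). indicator B (r *\<^sub>R (y /\<^sub>R norm y)) :: ennreal) \<in> borel_measurable (borel \<Otimes>\<^sub>M lborel)"
proof -
  assume B: "B \<in> sets borel"
  have g: "(\<lambda>(y::'a, r::real). r *\<^sub>R (y /\<^sub>R norm y)) \<in> measurable (borel \<Otimes>\<^sub>M lborel) borel"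
    by measurable
  have "(indicator B :: 'a \<Rightarrow> ennreal) \<circ> (\<lambda>(y::'a, r::real). r *\<^sub>R (y /\<^sub>R norm y)) \<in> borel_measurable (borel \<Otimes>\<^sub>M lborel)"
    by (rule measurable_comp[OF g borel_measurable_indicator[OF B]])
  then show ?thesis by (simp add: comp_def case_prod_beta')
qed

lemma ker_meas:
  assumes B: "B \<in> sets borel"
    and 1: "(\<lambda>(y::'a::euclidean_space, r). indicator {0<..} r * ennreal (a r (norm y))) \<in> borel_measurable (borel \<Otimes>\<^sub>M lborel)"
  shows "(\<lambda>y::'a. \<integral>\<^sup>+ r. indicator {0<..} r * ennreal (a r (norm y)) * indicator B (r *\<^sub>R (y /\<^sub>R norm y)) \<partial>lborel) \<in> borel_measurable borel"
proof -
  have "(\<lambda>x. (case x of (y::'a, r) \<Rightarrow> indicator {0<..} r * ennreal (a r (norm y))) * (case x of (y, r) \<Rightarrow> indicator B (r *\<^sub>R (y /\<^sub>R norm y)))) \<in> borel_measurable (borel \<Otimes>\<^sub>M lborel)"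
    by (rule borel_measurable_times_ennreal[OF 1 ind_meas[OF B]])
  then have "(\<lambda>(y::'a, r). indicator {0<..} r * ennreal (a r (norm y)) * indicator B (r *\<^sub>R (y /\<^sub>R norm y))) \<in> borel_measurable (borel \<Otimes>\<^sub>M lborel)"
    by (simp add: case_prod_beta')
  then show ?thesis by (rule lborel.borel_measurable_nn_integral)
qed

lemma a1_m: "(\<lambda>(y::'a::euclidean_space, r). indicator {0<..} r * ennreal (a1 r (norm y))) \<in> borel_measurable (borel \<Otimes>\<^sub>M lborel)"
  unfolding a1_def by measurable

lemma a2_m: "(\<lambda>(y::'a::euclidean_space, r). indicator {0<..} r * ennreal (a2 r (norm y))) \<in> borel_measurable (borel \<Otimes>\<^sub>M lborel)"
  unfolding a2_def by measurable

lemma a1a2: "s > 0 \<Longrightarrow> a1 r (s powr 2) = a2 r s"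
  by (simp add: a1_def a2_def)

lemma a2a1: "s > 0 \<Longrightarrow> a2 r (s powr (1/2)) = a1 r s"
  by (simp add: a1_def a2_def powr_half_sqrt)

lemma nn_ptrans:
  fixes nu :: "'a::euclidean_space measure"
  assumes "sets nu = sets borel" and f: "f \<in> borel_measurable borel"
  shows "(\<integral>\<^sup>+ y. f y \<partial>ptrans p nu) = (\<integral>\<^sup>+ x. indicator (-{0}) x * f (Tp p x) \<partial>nu)"
proof -
  have mT: "Tp p \<in> measurable (density nu (indicator (-{0}))) borel"
    using assms by (simp add: measurable_def space_borel)
  have e: "borel_measurable nu = borel_measurable borel"
    by (rule measurable_cong_sets[OF assms(1) refl])
  have mi: "indicator (-{0}) \<in> borel_measurable nu"
    unfolding e by measurable
  have mf: "(\<lambda>x. f (Tp p x)) \<in> borel_measurable nu"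
    unfolding e using f by measurable
  have f': "f \<in> borel_measurable (distr (density nu (indicator (-{0}))) borel (Tp p))"
    using f by simp
  show ?thesis
    unfolding ptrans_eq[OF assms(1)]
    by (simp add: nn_integral_distr[OF mT f'] nn_integral_density[OF mi] mf)
qed

lemma Tp_nz: "x \<noteq> 0 \<Longrightarrow> Tp p x \<noteq> 0"
  by (simp add: Tp_def)

lemma Tp_norm: "x \<noteq> 0 \<Longrightarrow> norm (Tp p x) = norm x powr p"
  by (simp add: Tp_def)

lemma Tp_dir: "x \<noteq> 0 \<Longrightarrow> Tp p x /\<^sub>R norm (Tp p x) = x /\<^sub>R norm x"
proof -
  assume x: "x \<noteq> 0"
  then have "norm x > 0" "norm x powr p > 0" by auto
  then show ?thesis using x by (simp add: Tp_def field_simps)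
qed

lemma sets_ptrans:
  fixes nu :: "'a::euclidean_space measure"
  assumes "sets nu = sets borel"
  shows "sets (ptrans p nu) = sets borel"
  unfolding ptrans_eq[OF assms] by simp

lemma ptrans_zero:
  fixes nu :: "'a::euclidean_space measure"
  assumes "sets nu = sets borel"
  shows "emeasure (ptrans p nu) {0} = 0"
proof -
  have "emeasure (ptrans p nu) {0} = (\<integral>\<^sup>+ y. indicator {0} y \<partial>ptrans p nu)"
    using sets_ptrans[OF assms] by simp
  also have "\<dots> = (\<integral>\<^sup>+ x. indicator (-{0}) x * indicator {0} (Tp p x) \<partial>nu)"
    by (rule nn_ptrans[OF assms]) simp
  also have "\<dots> = (\<integral>\<^sup>+ x. 0 \<partial>nu)"
    by (rule nn_integral_cong) (auto simp: indicator_def Tp_nz)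
  finally show ?thesis by simp
qed

lemma levy_int2:
  fixes nu :: "'a::euclidean_space measure"
  assumes "sets nu = sets borel"
  shows "(\<integral>\<^sup>+ y. ennreal (min 1 (norm y)) \<partial>ptrans 2 nu) = (\<integral>\<^sup>+ x. ennreal (min 1 (norm x ^ 2)) \<partial>nu)"
proof -
  have "(\<integral>\<^sup>+ y. ennreal (min 1 (norm y)) \<partial>ptrans 2 nu) = (\<integral>\<^sup>+ x. indicator (-{0}) x * ennreal (min 1 (norm (Tp 2 x))) \<partial>nu)"
    by (rule nn_ptrans[OF assms]) simp
  also have "\<dots> = (\<integral>\<^sup>+ x. ennreal (min 1 (norm x ^ 2)) \<partial>nu)"
    by (rule nn_integral_cong) (auto simp: indicator_def Tp_norm)
  finally show ?thesis .
qed

lemma levy_int1: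
  fixes nu :: "'a::euclidean_space measure"
  assumes "sets nu = sets borel"
  shows "(\<integral>\<^sup>+ y. ennreal (min 1 (norm y ^ 2)) \<partial>ptrans (1/2) nu) = (\<integral>\<^sup>+ x. ennreal (min 1 (norm x)) \<partial>nu)"
proof -
  have "(\<integral>\<^sup>+ y. ennreal (min 1 (norm y ^ 2)) \<partial>ptrans (1/2) nu) = (\<integral>\<^sup>+ x. indicator (-{0}) x * ennreal (min 1 (norm (Tp (1/2) x) ^ 2)) \<partial>nu)"
    by (rule nn_ptrans[OF assms]) simp
  also have "\<dots> = (\<integral>\<^sup>+ x. ennreal (min 1 (norm x)) \<partial>nu)"
    by (rule nn_integral_cong) (auto simp: indicator_def Tp_norm powr_half_sqrt)
  finally show ?thesis .
qed

lemma A_part: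
  fixes nu :: "'a::euclidean_space measure"
  assumes "sets nu = sets borel"
    and am: "(\<lambda>(y::'a, r). indicator {0<..} r * ennreal (a r (norm y))) \<in> borel_measurable (borel \<Otimes>\<^sub>M lborel)"
    and ab: "\<And>s r. s > 0 \<Longrightarrow> a r (s powr p) = b r s"
  shows "trA b nu = trA a (ptrans p nu)"
  unfolding trA_def
proof (rule measure_of_eq)
  show "sets borel \<subseteq> Pow UNIV" by simp
  fix B :: "'a set" assume "B \<in> sigma_sets UNIV (sets borel)"
  then have B: "B \<in> sets borel"
    by (metis sets.sigma_sets_eq space_borel)
  have "(\<integral>\<^sup>+ y. indicator (-{0}) y * (\<integral>\<^sup>+ r. indicator {0<..} r * ennreal (a r (norm y)) * indicator B (r *\<^sub>R (y /\<^sub>R norm y)) \<partial>lborel) \<partial>ptrans p nu)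
     = (\<integral>\<^sup>+ x. indicator (-{0}) x * (indicator (-{0}) (Tp p x) * (\<integral>\<^sup>+ r. indicator {0<..} r * ennreal (a r (norm (Tp p x))) * indicator B (r *\<^sub>R (Tp p x /\<^sub>R norm (Tp p x))) \<partial>lborel)) \<partial>nu)"
    by (rule nn_ptrans[OF assms(1)]) (intro borel_measurable_times_ennreal ker_meas[OF B am]; simp)
  also have "\<dots> = (\<integral>\<^sup>+ x. indicator (-{0}) x * (\<integral>\<^sup>+ r. indicator {0<..} r * ennreal (b r (norm x)) * indicator B (r *\<^sub>R (x /\<^sub>R norm x)) \<partial>lborel) \<partial>nu)"
  proof (rule nn_integral_cong)
    fix x :: 'a
    show "indicator (-{0}) x * (indicator (-{0}) (Tp p x) * (\<integral>\<^sup>+ r. indicator {0<..} r * ennreal (a r (norm (Tp p x))) * indicator B (r *\<^sub>R (Tp p x /\<^sub>R norm (Tp p x))) \<partial>lborel))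
      = indicator (-{0}) x * (\<integral>\<^sup>+ r. indicator {0<..} r * ennreal (b r (norm x)) * indicator B (r *\<^sub>R (x /\<^sub>R norm x)) \<partial>lborel)"
    proof (cases "x = 0")
      case True then show ?thesis by simp
    next
      case False
      have d: "Tp p x /\<^sub>R norm (Tp p x) = x /\<^sub>R norm x" using Tp_dir[OF False] .
      have n: "a r (norm (Tp p x)) = b r (norm x)" for r
        using Tp_norm[OF False] ab[of "norm x"] False by simp
      show ?thesis unfolding d n using False Tp_nz[OF False] by simp
    qed
  qed
  finally show "(\<integral>\<^sup>+ x. indicator (-{0}) x * (\<integral>\<^sup>+ r. indicator {0<..} r * ennreal (b r (norm x)) * indicator B (r *\<^sub>R (x /\<^sub>R norm x)) \<partial>lborel) \<partial>nu)
    = (\<integral>\<^sup>+ y. indicator (-{0}) y * (\<integral>\<^sup>+ r. indicator {0<..} r * ennreal (a r (norm y)) * indicator B (r *\<^sub>R (y /\<^sub>R norm y)) \<partial>lborel) \<partial>ptrans p nu)"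
    by simp
qed

theorem proposition2p5:
  fixes nu :: "'a::euclidean_space measure"
  assumes "sets nu = sets borel" and "emeasure nu {0} = 0"
  shows "(levy2 nu \<longleftrightarrow> levy1 (ptrans 2 nu))
     \<and> (levy2 nu \<longrightarrow> A2 nu = A1 (ptrans 2 nu))
     \<and> (levy1 nu \<longleftrightarrow> levy2 (ptrans (1/2) nu))
     \<and> (levy1 nu \<longrightarrow> A1 nu = A2 (ptrans (1/2) nu))"
proof (intro conjI impI)
  show "levy2 nu \<longleftrightarrow> levy1 (ptrans 2 nu)"
    unfolding levy1_def levy2_def
    using assms sets_ptrans[OF assms(1)] ptrans_zero[OF assms(1)] levy_int2[OF assms(1)] by simp
  show "levy1 nu \<longleftrightarrow> levy2 (ptrans (1/2) nu)"
    unfolding levy1_def levy2_def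
    using assms sets_ptrans[OF assms(1)] ptrans_zero[OF assms(1)] levy_int1[OF assms(1)] by simp
  show "A2 nu = A1 (ptrans 2 nu)"
    unfolding A1_def A2_def by (rule A_part[OF assms(1) a1_m a1a2])
  show "A1 nu = A2 (ptrans (1/2) nu)"
    unfolding A1_def A2_def by (rule A_part[OF assms(1) a2_m a2a1])
qed

end
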